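(* Let $T,B_1,B_3>0$, $C>0$ and $\varepsilon>0$. The function $H_\varepsilon:Y\times\mathbb{R}\times X_{B_1}\to\mathbb{R}$, $$H_\varepsilon(\tilde\theta,s,\gamma)=\int_{(0,T)^2}\Big(\Big|(A_\varepsilon\tilde\theta)_{t_2}(\gamma_{t_2})-(A_\varepsilon\tilde\theta)_{t_1}(\gamma_{t_1})-\big(\Theta(s,\gamma_{t_2},t_2)-\Theta(s,\gamma_{t_1},t_1)\big)^+\Big|-C(t_2-t_1)\Big)^+\chi_{\{t_1<t_2\}}\,dt_1dt_2,$$ is continuous.
   Context: $Q^{sat}:\mathbb{R}^3\to\mathbb{R}$ is smooth with $\partial_\theta Q^{sat}>0$, $\partial_zQ^{sat}<0$; $\Theta(w,z,t)$ is the solution $\theta$ of $\theta+Q^{sat}(\theta,z,t)=w$ (assumed well defined), smooth. $X_{B_1}$: left-continuous $\gamma:(0,T)\to[0,1]$ with total variation $\le B_1$, metric $\|\cdot\|_{L^2(0,T)}$; $\gamma_t=\gamma(t)$. $Y_{B_3}$: nondecreasing $\theta:[0,1]\to\mathbb{R}$, right-continuous on $[0,1)$, $|\theta|\le B_3$, metric $L^2(0,1)$. $Y=C([0,T);Y_{B_3})$ with sup-in-time metric. $(A_\varepsilon\tilde\theta)_t(z)=\varepsilon^{-1}\int_z^{z+\varepsilon}\tilde\theta_t(w)\,dw$, with $\tilde\theta_t(w)=B_3$ for $w\ge1$. *)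

theory Defs
  imports "HOL-Analysis.Analysis"
begin

coinductive smooth_fn :: "('a::euclidean_space \<Rightarrow> real) \<Rightarrow> bool" where
  "(\<forall>x. f differentiable (at x)) \<Longrightarrow>
   (\<forall>b\<in>Basis. smooth_fn (\<lambda>x. frechet_derivative f (at x) b)) \<Longrightarrow> smooth_fn f"

definition variation_le :: "real set \<Rightarrow> (real \<Rightarrow> real) \<Rightarrow> real \<Rightarrow> bool" where
  "variation_le S g B \<longleftrightarrow>
     (\<forall>(n::nat) (p::nat \<Rightarrow> real). (\<forall>i\<le>n. p i \<in> S) \<and> (\<forall>i<n. p i < p (Suc i)) \<longrightarrow>
        (\<Sum>i<n. \<bar>g (p (Suc i)) - g (p i)\<bar>) \<le> B)"

definition X_B1 :: "real \<Rightarrow> real \<Rightarrow> (real \<Rightarrow> real) set" where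
  "X_B1 T B1 = {g. (\<forall>t\<in>{0<..<T}. (g \<longlongrightarrow> g t) (at_left t))
                 \<and> (\<forall>t\<in>{0<..<T}. 0 \<le> g t \<and> g t \<le> 1)
                 \<and> variation_le {0<..<T} g B1}"

definition L2dist_X :: "real \<Rightarrow> (real \<Rightarrow> real) \<Rightarrow> (real \<Rightarrow> real) \<Rightarrow> real" where
  "L2dist_X T g h = sqrt (integral {0<..<T} (\<lambda>t. (g t - h t)\<^sup>2))"

definition Y_B3 :: "real \<Rightarrow> (real \<Rightarrow> real) set" where
  "Y_B3 B3 = {f. mono_on {0..1} f
               \<and> (\<forall>z\<in>{0..<1}. (f \<longlongrightarrow> f z) (at_right z))
               \<and> (\<forall>z\<in>{0..1}. \<bar>f z\<bar> \<le> B3)}"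

definition L2dist_01 :: "(real \<Rightarrow> real) \<Rightarrow> (real \<Rightarrow> real) \<Rightarrow> real" where
  "L2dist_01 f g = sqrt (integral {0<..<1} (\<lambda>z. (f z - g z)\<^sup>2))"

definition Y_sp :: "real \<Rightarrow> real \<Rightarrow> (real \<Rightarrow> real \<Rightarrow> real) set" where
  "Y_sp T B3 = {th. (\<forall>t\<in>{0..<T}. th t \<in> Y_B3 B3)
     \<and> (\<forall>t\<in>{0..<T}. \<forall>e>0. \<exists>d>0. \<forall>t'\<in>{0..<T}.
           \<bar>t' - t\<bar> < d \<longrightarrow> L2dist_01 (th t') (th t) < e)}"

definition dist_Y :: "real \<Rightarrow> (real \<Rightarrow> real \<Rightarrow> real) \<Rightarrow> (real \<Rightarrow> real \<Rightarrow> real) \<Rightarrow> real" where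
  "dist_Y T th1 th2 = (SUP t\<in>{0..<T}. L2dist_01 (th1 t) (th2 t))"

definition A_eps :: "real \<Rightarrow> real \<Rightarrow> (real \<Rightarrow> real \<Rightarrow> real) \<Rightarrow> real \<Rightarrow> real \<Rightarrow> real" where
  "A_eps B3 \<epsilon> th t z = (1 / \<epsilon>) * integral {z..z+\<epsilon>} (\<lambda>w. if 1 \<le> w then B3 else th t w)"

definition H_eps :: "real \<Rightarrow> real \<Rightarrow> real \<Rightarrow> real \<Rightarrow> (real \<Rightarrow> real \<Rightarrow> real \<Rightarrow> real)
     \<Rightarrow> (real \<Rightarrow> real \<Rightarrow> real) \<Rightarrow> real \<Rightarrow> (real \<Rightarrow> real) \<Rightarrow> real" where
  "H_eps T B3 C \<epsilon> Th th s g =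
     integral ({0<..<T} \<times> {0<..<T})
       (\<lambda>(t1, t2). if t1 < t2 then
          max 0 (\<bar>A_eps B3 \<epsilon> th t2 (g t2) - A_eps B3 \<epsilon> th t1 (g t1)
                   - max 0 (Th s (g t2) t2 - Th s (g t1) t1)\<bar> - C * (t2 - t1))
        else 0)"

end

theory Submission
  imports Defs
begin


definition extf :: "real \<Rightarrow> (real \<Rightarrow> real) \<Rightarrow> real \<Rightarrow> real" where
  "extf B f w = (if 1 \<le> w then B else f w)"

lemma Y_B3_D:
  assumes "f \<in> Y_B3 B"
  shows "mono_on {0..1} f" "\<And>z. z \<in> {0..1} \<Longrightarrow> \<bar>f z\<bar> \<le> B"
  using assms unfolding Y_B3_def by auto

lemma extf_mono:
  assumes "f \<in> Y_B3 B" "0 \<le> a"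
  shows "mono_on {a..b} (extf B f)"
proof -
  note Y = Y_B3_D[OF assms(1)]
  show ?thesis
  proof (rule mono_onI)
    fix x y assume xy: "x \<in> {a..b}" "y \<in> {a..b}" "x \<le> y"
    show "extf B f x \<le> extf B f y"
    proof (cases "1 \<le> y")
      case True
      then show ?thesis using Y(2)[of x] xy assms(2) by (auto simp: extf_def)
    next
      case False
      then show ?thesis using Y(1) xy assms(2) by (auto simp: extf_def mono_on_def)
    qed
  qed
qed

lemma extf_bound:
  assumes "f \<in> Y_B3 B" "0 \<le> w"
  shows "\<bar>extf B f w\<bar> \<le> B"
proof -
  note Y = Y_B3_D[OF assms(1)]
  have "\<bar>f 0\<bar> \<le> B" using Y(2)[of 0] by auto
  then show ?thesis using Y(2)[of w] assms(2) by (auto simp: extf_def)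
qed

lemma extf_int:
  assumes "f \<in> Y_B3 B" "0 \<le> a"
  shows "extf B f integrable_on {a..b}"
  by (rule integrable_on_mono_on[OF extf_mono[OF assms]])

lemma extf_int_bound:
  assumes "f \<in> Y_B3 B" "0 \<le> x" "x \<le> y"
  shows "\<bar>integral {x..y} (extf B f)\<bar> \<le> B * (y - x)"
proof -
  have "norm (integral {x..y} (extf B f)) \<le> integral {x..y} (\<lambda>_. B)"
    by (rule integral_norm_bound_integral) (use extf_int[OF assms(1,2)] extf_bound[OF assms(1)] assms in auto)
  then show ?thesis using assms by (simp add: mult.commute)
qed

lemma A_eps_alt: "A_eps B e th t z = (1/e) * integral {z..z+e} (extf B (th t))"
  unfolding A_eps_def extf_def by simp

lemma A_bound:
  assumes "f \<in> Y_B3 B" "0 \<le> z" "e > 0"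
  shows "\<bar>(1/e) * integral {z..z+e} (extf B f)\<bar> \<le> B"
proof -
  have "\<bar>integral {z..z+e} (extf B f)\<bar> \<le> B * e" using extf_int_bound[OF assms(1,2), of "z+e"] assms by simp
  then show ?thesis using assms(3) by (simp add: abs_mult field_simps)
qed

lemma prim_lip:
  assumes "f \<in> Y_B3 B" "0 \<le> u" "0 \<le> v"
  shows "\<bar>integral {0..u} (extf B f) - integral {0..v} (extf B f)\<bar> \<le> B * \<bar>u - v\<bar>"
proof -
  have *: "\<bar>integral {0..u} (extf B f) - integral {0..v} (extf B f)\<bar> \<le> B * \<bar>u - v\<bar>"
    if "0 \<le> u" "u \<le> v" for u v
  proof -
    have "integral {0..u} (extf B f) + integral {u..v} (extf B f) = integral {0..v} (extf B f)"
      using Henstock_Kurzweil_Integration.integral_combine[where a=0 and c=u and b=v and f="extf B f"] that extf_int[OF assms(1)] by auto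
    then show ?thesis using extf_int_bound[OF assms(1) that] that by auto
  qed
  show ?thesis
  proof (cases "u \<le> v")
    case True then show ?thesis using *[of u v] assms by auto
  next
    case False then show ?thesis using *[of v u] assms by (auto simp: abs_minus_commute)
  qed
qed

lemma int_prim:
  assumes "f \<in> Y_B3 B" "0 \<le> z" "e > 0"
  shows "integral {z..z+e} (extf B f) = integral {0..z+e} (extf B f) - integral {0..z} (extf B f)"
proof -
  have "integral {0..z} (extf B f) + integral {z..z+e} (extf B f) = integral {0..z+e} (extf B f)"
    using Henstock_Kurzweil_Integration.integral_combine[where a=0 and c=z and b="z+e" and f="extf B f"] assms extf_int[OF assms(1)] by auto
  then show ?thesis by simp
qed

lemma A_lip:
  assumes "f \<in> Y_B3 B" "0 \<le> z" "0 \<le> z'" "e > 0"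
  shows "\<bar>(1/e) * integral {z..z+e} (extf B f) - (1/e) * integral {z'..z'+e} (extf B f)\<bar> \<le> 2 * B * \<bar>z - z'\<bar> / e"
proof -
  have a: "\<bar>integral {0..z+e} (extf B f) - integral {0..z'+e} (extf B f)\<bar> \<le> B * \<bar>z - z'\<bar>"
    using prim_lip[OF assms(1), of "z+e" "z'+e"] assms by auto
  have b: "\<bar>integral {0..z} (extf B f) - integral {0..z'} (extf B f)\<bar> \<le> B * \<bar>z - z'\<bar>"
    using prim_lip[OF assms(1,2,3)] .
  have "\<bar>integral {z..z+e} (extf B f) - integral {z'..z'+e} (extf B f)\<bar> \<le> 2 * B * \<bar>z - z'\<bar>"
    unfolding int_prim[OF assms(1,2,4)] int_prim[OF assms(1,3,4)] using a b by linarith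
  then show ?thesis using assms(4)
    by (simp add: right_diff_distrib[symmetric] abs_mult divide_simps mult.commute)
qed


lemma bdd_meas_int:
  fixes f :: "real \<Rightarrow> real"
  assumes "f \<in> borel_measurable (lebesgue_on {a..b})" "\<And>x. x \<in> {a..b} \<Longrightarrow> \<bar>f x\<bar> \<le> K"
  shows "f integrable_on {a..b}"
  by (rule measurable_bounded_by_integrable_imp_integrable_real[OF assms(1) _ assms(2)]) auto

lemma extf_meas:
  assumes "f \<in> Y_B3 B" "0 \<le> a"
  shows "extf B f \<in> borel_measurable (lebesgue_on {a..b})"
  by (rule integrable_imp_measurable_weak[OF _ extf_int[OF assms]]) auto

lemma Y_meas:
  assumes "f \<in> Y_B3 B"
  shows "f \<in> borel_measurable (lebesgue_on {0..1})"
proof -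
  have "integrable (lebesgue_on {0..1}) f" using integrable_mono_on Y_B3_D(1)[OF assms] by blast
  then show ?thesis by (rule borel_measurable_integrable)
qed

lemma abs_le_sq: "c > 0 \<Longrightarrow> \<bar>x::real\<bar> \<le> x\<^sup>2 / (2*c) + c/2"
proof -
  assume c: "c > 0"
  have "0 \<le> (\<bar>x\<bar> - c)\<^sup>2" by simp
  then have "2 * c * \<bar>x\<bar> \<le> x\<^sup>2 + c\<^sup>2" by (simp add: power2_eq_square algebra_simps)
  then show ?thesis using c by (simp add: field_simps power2_eq_square)
qed

lemma L2_int:
  assumes "f \<in> Y_B3 B" "h \<in> Y_B3 B"
  shows "(\<lambda>w. (f w - h w)\<^sup>2) integrable_on {0..1}"
    "\<bar>integral {0..1} (\<lambda>w. (f w - h w)\<^sup>2)\<bar> \<le> 4 * B\<^sup>2"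
    "integral {0..1} (\<lambda>w. (f w - h w)\<^sup>2) = (L2dist_01 f h)\<^sup>2"
    "0 \<le> L2dist_01 f h"
proof -
  have bd: "\<bar>(f w - h w)\<^sup>2\<bar> \<le> 4*B\<^sup>2" if "w \<in> {0..1}" for w
  proof -
    have "\<bar>f w - h w\<bar> \<le> 2*B" using Y_B3_D(2)[OF assms(1) that] Y_B3_D(2)[OF assms(2) that] by linarith
    then have "\<bar>f w - h w\<bar>\<^sup>2 \<le> (2*B)\<^sup>2" by (rule power_mono) simp
    then show ?thesis by (simp add: power_mult_distrib)
  qed
  show i: "(\<lambda>w. (f w - h w)\<^sup>2) integrable_on {0..1}"
    by (rule bdd_meas_int[OF _ bd]) (use Y_meas[OF assms(1)] Y_meas[OF assms(2)] in measurable)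
  show "\<bar>integral {0..1} (\<lambda>w. (f w - h w)\<^sup>2)\<bar> \<le> 4 * B\<^sup>2"
    using Henstock_Kurzweil_Integration.integral_norm_bound_integral[OF i, of "\<lambda>w. 4*B\<^sup>2"] bd by auto
  have nn: "0 \<le> integral {0..1} (\<lambda>w. (f w - h w)\<^sup>2)" by (rule integral_nonneg[OF i]) auto
  then show "integral {0..1} (\<lambda>w. (f w - h w)\<^sup>2) = (L2dist_01 f h)\<^sup>2"
    unfolding L2dist_01_def by (simp add: integral_open_interval_real)
  show "0 \<le> L2dist_01 f h" using nn
    unfolding L2dist_01_def by (simp add: integral_open_interval_real)
qed

lemma k_int:
  assumes "f \<in> Y_B3 B" "h \<in> Y_B3 B" "0 \<le> a"
  shows "(\<lambda>w. \<bar>extf B f w - extf B h w\<bar>) integrable_on {a..b}"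
proof (rule bdd_meas_int[where K="2*B"])
  show "(\<lambda>w. \<bar>extf B f w - extf B h w\<bar>) \<in> borel_measurable (lebesgue_on {a..b})"
    using extf_meas[OF assms(1,3)] extf_meas[OF assms(2,3)] by measurable
  fix x assume "x \<in> {a..b}"
  then show "\<bar>\<bar>extf B f x - extf B h x\<bar>\<bar> \<le> 2 * B"
    using extf_bound[OF assms(1), of x] extf_bound[OF assms(2), of x] assms(3) by auto
qed

lemma A_diff:
  assumes f: "f \<in> Y_B3 B" and h: "h \<in> Y_B3 B" and z: "0 \<le> z" and e: "e > 0" and c: "c > 0"
    and L: "L2dist_01 f h < c"
  shows "\<bar>(1/e) * integral {z..z+e} (extf B f) - (1/e) * integral {z..z+e} (extf B h)\<bar> \<le> c / e"
proof -
  define k where "k w = \<bar>extf B f w - extf B h w\<bar>" for w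
  have ki: "k integrable_on {a..b}" if "0 \<le> a" for a b
    unfolding k_def using k_int[OF f h that] .
  have d: "integral {z..z+e} (extf B f) - integral {z..z+e} (extf B h)
      = integral {z..z+e} (\<lambda>w. extf B f w - extf B h w)"
    by (rule integral_diff[symmetric]) (use extf_int[OF f z] extf_int[OF h z] in auto)
  have "\<bar>integral {z..z+e} (\<lambda>w. extf B f w - extf B h w)\<bar> \<le> integral {z..z+e} k"
    using Henstock_Kurzweil_Integration.integral_norm_bound_integral[OF _ ki[OF z], of "\<lambda>w. extf B f w - extf B h w"]
      integrable_diff[OF extf_int[OF f z] extf_int[OF h z]] by (auto simp: k_def)
  also have "\<dots> \<le> integral {0..z+e+1} k"
    by (rule integral_subset_le) (use z e ki in \<open>auto simp: k_def\<close>)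
  also have "\<dots> = integral {0..1} k + integral {1..z+e+1} k"
    using Henstock_Kurzweil_Integration.integral_combine[where a=0 and c=1 and b="z+e+1" and f=k] ki[of 0] z e by auto
  also have "integral {1..z+e+1} k = 0"
  proof -
    have "integral {1..z+e+1} k = integral {1..z+e+1} (\<lambda>_. 0::real)"
      by (rule integral_cong) (auto simp: k_def extf_def)
    then show ?thesis by simp
  qed
  also have "integral {0..1} k \<le> integral {0..1} (\<lambda>w. (f w - h w)\<^sup>2 / (2*c) + c/2)"
  proof (rule integral_le)
    show "k integrable_on {0..1}" using ki by auto
    show "(\<lambda>w. (f w - h w)\<^sup>2 / (2*c) + c/2) integrable_on {0..1}"
      using L2_int(1)[OF f h] by (intro integrable_add integrable_on_divide) auto
    fix w :: real assume w: "w \<in> {0..1}"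
    show "k w \<le> (f w - h w)\<^sup>2 / (2*c) + c/2"
    proof (cases "w = 1")
      case True then show ?thesis using c by (simp add: k_def extf_def)
    next
      case False then show ?thesis using w abs_le_sq[OF c, of "f w - h w"] by (simp add: k_def extf_def)
    qed
  qed
  also have "\<dots> = integral {0..1} (\<lambda>w. (f w - h w)\<^sup>2) / (2*c) + c/2"
  proof -
    have i: "(\<lambda>w. (f w - h w)\<^sup>2) integrable_on {0..1}" by (rule L2_int(1)[OF f h])
    have "integral {0..1} (\<lambda>w. (f w - h w)\<^sup>2 / (2*c)) = integral {0..1} (\<lambda>w. (f w - h w)\<^sup>2) / (2*c)"
      using has_integral_divide[OF integrable_integral[OF i], of "2*c"] by (rule integral_unique)
    then show ?thesis using integral_add[OF integrable_on_divide[OF i, of "2*c"] integrable_const_ivl[of "c/2" 0 1]]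
      by simp
  qed
  also have "\<dots> \<le> c"
  proof -
    have "(L2dist_01 f h)\<^sup>2 \<le> c\<^sup>2" using L L2_int(4)[OF f h] by (intro power_mono) auto
    then show ?thesis using c L2_int(3)[OF f h] by (simp add: field_simps power2_eq_square)
  qed
  finally have "\<bar>integral {z..z+e} (extf B f) - integral {z..z+e} (extf B h)\<bar> \<le> c" using d by simp
  then show ?thesis using e
    by (simp add: right_diff_distrib[symmetric] abs_mult divide_simps mult.commute)
qed



lemma X_B1_D:
  assumes "g \<in> X_B1 T B1" "t \<in> {0<..<T}"
  shows "(g \<longlongrightarrow> g t) (at_left t)" "0 \<le> g t" "g t \<le> 1"
  using assms unfolding X_B1_def by auto

lemma X_meas:
  assumes g: "g \<in> X_B1 T B1"
  shows "(\<lambda>t. if t \<in> {0<..<T} then g t else 0) \<in> borel_measurable borel"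
proof -
  define p where "p n t = (real_of_int \<lceil>real (Suc n) * t\<rceil> - 1) / real (Suc n)" for n and t::real
  define u where "u n t = (if t \<in> {0<..<T} then g (p n t) else 0)" for n t
  have um: "u n \<in> borel_measurable borel" for n
  proof -
    have "(\<lambda>t. g ((real_of_int \<lceil>real (Suc n) * t\<rceil> - 1) / real (Suc n))) \<in> borel_measurable borel"
    proof -
      have "(\<lambda>t. (\<lambda>(i::int) (t::real). g ((real_of_int i - 1) / real (Suc n))) (\<lceil>real (Suc n) * t\<rceil>) t) \<in> borel_measurable borel"
        by (rule measurable_compose_countable) measurable
      then show ?thesis by simp
    qed
    then show ?thesis unfolding u_def p_def by measurable
  qed
  show ?thesis
  proof (rule borel_measurable_LIMSEQ_real[OF _ um])
    fix t :: real
    show "(\<lambda>n. u n t) \<longlonglongrightarrow> (if t \<in> {0<..<T} then g t else 0)"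
    proof (cases "t \<in> {0<..<T}")
      case False then show ?thesis unfolding u_def by (simp del: greaterThanLessThan_iff)
    next
      case True
      have lo: "t - 1 / real (Suc n) \<le> p n t" and hi: "p n t < t" for n
      proof -
        define m where "m = real (Suc n)"
        define c where "c = real_of_int \<lceil>m * t\<rceil>"
        have m: "m > 0" by (simp add: m_def)
        have c1: "m * t \<le> c" unfolding c_def by (rule le_of_int_ceiling)
        have c2: "c < m * t + 1" unfolding c_def using ceiling_correct[of "m * t"] by linarith
        have pe: "p n t = c / m - 1 / m" unfolding p_def c_def m_def by (simp add: diff_divide_distrib)
        have "t \<le> c / m" using c1 m by (simp add: pos_le_divide_eq mult.commute)
        moreover have "c / m < t + 1 / m" using c2 m by (simp add: pos_divide_less_eq algebra_simps)
        ultimately show "t - 1 / real (Suc n) \<le> p n t" "p n t < t" unfolding pe m_def[symmetric] by linarith+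
      qed
      have pt: "(\<lambda>n. p n t) \<longlonglongrightarrow> t"
      proof (rule tendsto_sandwich[of "\<lambda>n. t - 1 / real (Suc n)" _ _ "\<lambda>n. t"])
        show "(\<lambda>n. t - 1 / real (Suc n)) \<longlonglongrightarrow> t"
          using tendsto_diff[OF tendsto_const[of t] LIMSEQ_inverse_real_of_nat] by (simp add: divide_inverse)
      qed (use lo hi less_imp_le in \<open>auto intro!: always_eventually\<close>)
      have "filterlim (\<lambda>n. p n t) (at_left t) sequentially"
        unfolding filterlim_at using pt hi by (auto intro!: always_eventually less_imp_neq)
      from filterlim_compose[OF X_B1_D(1)[OF g True] this]
      have "(\<lambda>n. g (p n t)) \<longlonglongrightarrow> g t" .
      then show ?thesis using True by (simp add: u_def)
    qed
  qed
qed



lemma Y_sp_D: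
  assumes "th \<in> Y_sp T B" "t \<in> {0..<T}"
  shows "th t \<in> Y_B3 B"
    "\<And>e. e > 0 \<Longrightarrow> \<exists>d>0. \<forall>t'\<in>{0..<T}. \<bar>t' - t\<bar> < d \<longrightarrow> L2dist_01 (th t') (th t) < e"
  using assms unfolding Y_sp_def by auto

definition clmp :: "real \<Rightarrow> real" where "clmp z = max 0 (min 1 z)"

lemma clmp_props: "0 \<le> clmp z" "clmp z \<le> 1" "\<bar>clmp z - clmp z'\<bar> \<le> \<bar>z - z'\<bar>"
  "z \<in> {0..1} \<Longrightarrow> clmp z = z"
  unfolding clmp_def by auto

lemma dist_pair_ge: "\<bar>a - c\<bar> \<le> dist (a, b) (c::real, d::real)" "\<bar>b - d\<bar> \<le> dist (a, b) (c::real, d::real)"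
  unfolding dist_Pair_Pair dist_real_def
  by (auto intro: real_sqrt_sum_squares_ge1 real_sqrt_sum_squares_ge2)

lemma phi_cont:
  assumes th: "th \<in> Y_sp T B" and e: "e > 0" and B: "B \<ge> 0"
    and \<phi>: "\<phi> = (\<lambda>(t, z). (1/e) * integral {clmp z..clmp z + e} (extf B (th t)))"
  shows "continuous_on ({0<..<T} \<times> UNIV) \<phi>"
  unfolding continuous_on_iff
proof (intro ballI allI impI)
  fix x :: "real \<times> real" and e0 :: real
  assume x: "x \<in> {0<..<T} \<times> UNIV" and e0: "0 < e0"
  obtain t0 z0 where xe0: "x = (t0, z0)" by fastforce
  have t0: "t0 \<in> {0<..<T}" using x xe0 by auto
  then have t0': "t0 \<in> {0..<T}" by auto
  obtain d1 where d1: "d1 > 0" "\<forall>t'\<in>{0..<T}. \<bar>t' - t0\<bar> < d1 \<longrightarrow> L2dist_01 (th t') (th t0) < e0 * e / 3"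
    using Y_sp_D(2)[OF th t0', of "e0 * e / 3"] e e0 by auto
  define d2 where "d2 = e0 * e / (6 * B + 1)"
  have d2: "d2 > 0" using e e0 B by (simp add: d2_def)
  show "\<exists>d>0. \<forall>x'\<in>{0<..<T} \<times> UNIV. dist x' x < d \<longrightarrow> dist (\<phi> x') (\<phi> x) < e0"
  proof (intro exI[of _ "min d1 d2"] conjI ballI impI)
    show "0 < min d1 d2" using d1 d2 by auto
    fix x' assume x': "x' \<in> {0<..<T} \<times> UNIV" and dx: "dist x' x < min d1 d2"
    obtain t z where xe: "x' = (t, z)" by fastforce
    have t: "t \<in> {0..<T}" using x' xe by auto
    have dt: "\<bar>t - t0\<bar> < d1" and dz: "\<bar>z - z0\<bar> < d2" using dx xe0 dist_pair_ge(1)[of t t0 z z0] dist_pair_ge(2)[of z z0 t t0] xe by auto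
    have Yt: "th t \<in> Y_B3 B" and Yt0: "th t0 \<in> Y_B3 B" using Y_sp_D(1)[OF th] t t0' by auto
    have i1: "\<bar>(1/e) * integral {clmp z..clmp z + e} (extf B (th t)) - (1/e) * integral {clmp z..clmp z + e} (extf B (th t0))\<bar> \<le> (e0 * e / 3) / e"
      by (rule A_diff[OF Yt Yt0 clmp_props(1) e]) (use d1 t dt e e0 in auto)
    have i2: "\<bar>(1/e) * integral {clmp z..clmp z + e} (extf B (th t0)) - (1/e) * integral {clmp z0..clmp z0 + e} (extf B (th t0))\<bar> \<le> 2 * B * \<bar>clmp z - clmp z0\<bar> / e"
      by (rule A_lip[OF Yt0 clmp_props(1) clmp_props(1) e])
    have "2 * B * \<bar>clmp z - clmp z0\<bar> / e \<le> 2 * B * d2 / e"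
      using clmp_props(3)[of z z0] dz B e by (intro divide_right_mono mult_left_mono) auto
    also have "2 * B * d2 / e < e0 / 2"
    proof -
      have "2 * B * d2 = e0 * e * (2 * B / (6 * B + 1))" by (simp add: d2_def)
      also have "\<dots> < e0 * e * (1/2)" using e e0 B by (intro mult_strict_left_mono) (auto simp: field_simps)
      finally show ?thesis using e by (simp add: field_simps)
    qed
    finally have i2': "2 * B * \<bar>clmp z - clmp z0\<bar> / e < e0 / 2" .
    have "(e0 * e / 3) / e = e0 / 3" using e by simp
    then show "dist (\<phi> x') (\<phi> x) < e0"
      using i1 i2 i2' xe xe0 unfolding dist_real_def \<phi> by simp
  qed
qed

lemma a_meas:
  assumes th: "th \<in> Y_sp T B" and e: "e > 0" and B: "B \<ge> 0" and g: "g \<in> X_B1 T B1"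
  shows "(\<lambda>t. if t \<in> {0<..<T} then A_eps B e th t (g t) else 0) \<in> borel_measurable borel"
proof -
  define \<phi> where "\<phi> = (\<lambda>(t, z). (1/e) * integral {clmp z..clmp z + e} (extf B (th t)))"
  define \<psi> where "\<psi> x = (if x \<in> {0<..<T} \<times> (UNIV::real set) then \<phi> x else 0)" for x
  have pm: "\<psi> \<in> borel_measurable borel" unfolding \<psi>_def
    by (rule borel_measurable_continuous_on_if) (use phi_cont[OF th e B \<phi>_def] in \<open>auto simp: \<phi>_def intro!: borel_open open_Times\<close>)
  define gS where "gS t = (if t \<in> {0<..<T} then g t else 0)" for t
  have gm: "gS \<in> borel_measurable borel" unfolding gS_def by (rule X_meas[OF g])
  have "(\<lambda>t. \<psi> (t, gS t)) \<in> borel_measurable borel"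
    using pm gm by measurable
  moreover have "(\<lambda>t. \<psi> (t, gS t)) = (\<lambda>t. if t \<in> {0<..<T} then A_eps B e th t (g t) else 0)"
  proof
    fix t show "\<psi> (t, gS t) = (if t \<in> {0<..<T} then A_eps B e th t (g t) else 0)"
      using X_B1_D(2,3)[OF g, of t] clmp_props(4)[of "g t"]
      by (auto simp: \<psi>_def \<phi>_def gS_def A_eps_alt)
  qed
  ultimately show ?thesis by simp
qed

lemma Th_cont:
  assumes "smooth_fn (\<lambda>(w, z, t). Th w z t)"
  shows "continuous_on UNIV (\<lambda>(w, z, t). Th w z t :: real)"
proof -
  from assms have "\<forall>x. (\<lambda>(w, z, t). Th w z t) differentiable (at x)"
    by (cases rule: smooth_fn.cases) auto
  then show ?thesis
    by (intro continuous_at_imp_continuous_on ballI differentiable_imp_continuous_within) auto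
qed

lemma b_meas:
  assumes Th: "smooth_fn (\<lambda>(w, z, t). Th w z t)" and g: "g \<in> X_B1 T B1"
  shows "(\<lambda>t. if t \<in> {0<..<T} then Th s (g t) t else 0) \<in> borel_measurable borel"
proof -
  define TH where "TH = (\<lambda>(w, z, t). Th w z t :: real)"
  have tm: "TH \<in> borel_measurable borel" unfolding TH_def by (rule borel_measurable_continuous_onI[OF Th_cont[OF Th]])
  define gS where "gS t = (if t \<in> {0<..<T} then g t else 0)" for t
  have gm: "gS \<in> borel_measurable borel" unfolding gS_def by (rule X_meas[OF g])
  have "(\<lambda>t. if t \<in> {0<..<T} then TH (s, gS t, t) else 0) \<in> borel_measurable borel"
    using tm gm by measurable
  moreover have "(\<lambda>t. if t \<in> {0<..<T} then TH (s, gS t, t) else 0) = (\<lambda>t. if t \<in> {0<..<T} then Th s (g t) t else 0)"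
    by (auto simp: TH_def gS_def)
  ultimately show ?thesis by simp
qed



lemma borel_to_lebesgue_on:
  assumes "f \<in> borel_measurable borel"
  shows "f \<in> borel_measurable (lebesgue_on X)"
proof -
  have "f \<in> borel_measurable lborel" using assms by simp
  then have "f \<in> borel_measurable lebesgue" by (rule measurable_completion)
  then show ?thesis by (rule measurable_restrict_space1)
qed

lemma measure_Times_real:
  fixes A B :: "real set"
  assumes A: "A \<in> sets borel" and B: "B \<in> sets borel"
  shows "measure lebesgue (A \<times> B) = measure lebesgue A * measure lebesgue B"
proof -
  have AB: "A \<times> B \<in> sets (borel \<Otimes>\<^sub>M borel)" using A B by auto
  have AB'': "A \<times> B \<in> sets (borel :: (real \<times> real) measure)" using AB unfolding borel_prod .
  then have AB': "A \<times> B \<in> sets (lborel :: (real \<times> real) measure)" by simp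
  have "measure lebesgue (A \<times> B) = measure lborel (A \<times> B)"
    using AB' by (simp add: measure_completion)
  also have "\<dots> = measure (lborel \<Otimes>\<^sub>M lborel) (A \<times> B)" by (simp add: lborel_prod)
  also have "\<dots> = enn2real (emeasure lborel A * emeasure lborel B)"
    unfolding measure_def using A B by (simp add: lborel.emeasure_pair_measure_Times)
  also have "\<dots> = measure lborel A * measure lborel B"
    by (simp add: measure_def enn2real_mult)
  also have "\<dots> = measure lebesgue A * measure lebesgue B"
    using A B by (simp add: measure_completion)
  finally show ?thesis .
qed

lemma F_lip:
  fixes a1 a2 b1 b2 a1' a2' b1' b2' c :: real
  shows "\<bar>max 0 (\<bar>a2' - a1' - max 0 (b2' - b1')\<bar> - c) - max 0 (\<bar>a2 - a1 - max 0 (b2 - b1)\<bar> - c)\<bar>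
     \<le> \<bar>a2' - a2\<bar> + \<bar>a1' - a1\<bar> + \<bar>b2' - b2\<bar> + \<bar>b1' - b1\<bar>"
proof -
  have m: "\<bar>max 0 x - max 0 y\<bar> \<le> \<bar>x - y\<bar>" for x y :: real by (simp add: max_def abs_if)
  have n: "\<bar>\<bar>x\<bar> - \<bar>y\<bar>\<bar> \<le> \<bar>x - y\<bar>" for x y :: real by arith
  have "\<bar>max 0 (\<bar>a2' - a1' - max 0 (b2' - b1')\<bar> - c) - max 0 (\<bar>a2 - a1 - max 0 (b2 - b1)\<bar> - c)\<bar>
     \<le> \<bar>(a2' - a1' - max 0 (b2' - b1')) - (a2 - a1 - max 0 (b2 - b1))\<bar>"
    using m[of "\<bar>a2' - a1' - max 0 (b2' - b1')\<bar> - c" "\<bar>a2 - a1 - max 0 (b2 - b1)\<bar> - c"]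
      n[of "a2' - a1' - max 0 (b2' - b1')" "a2 - a1 - max 0 (b2 - b1)"] by simp
  also have "\<dots> \<le> \<bar>a2' - a2\<bar> + \<bar>a1' - a1\<bar> + \<bar>max 0 (b2' - b1') - max 0 (b2 - b1)\<bar>" by arith
  also have "\<bar>max 0 (b2' - b1') - max 0 (b2 - b1)\<bar> \<le> \<bar>b2' - b2\<bar> + \<bar>b1' - b1\<bar>"
    using m[of "b2' - b1'" "b2 - b1"] by arith
  finally show ?thesis by simp
qed

lemma SS_box: "{0<..<T} \<times> {0<..<T} = box (0::real, 0::real) (T, T)"
  by (auto simp: box_def Basis_prod_def inner_prod_def)

lemma SS_lmeas: "{0<..<T::real} \<times> {0<..<T} \<in> lmeasurable"
  unfolding SS_box by simp


lemma fst_bm[measurable]: "(fst :: real\<times>real \<Rightarrow> real) \<in> borel_measurable borel"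
  by (intro borel_measurable_continuous_onI continuous_intros)
lemma snd_bm[measurable]: "(snd :: real\<times>real \<Rightarrow> real) \<in> borel_measurable borel"
  by (intro borel_measurable_continuous_onI continuous_intros)

lemma A_bound':
  assumes th: "th \<in> Y_sp T B" and g: "g \<in> X_B1 T B1" and t: "t \<in> {0<..<T}" and e: "e > 0"
  shows "\<bar>A_eps B e th t (g t)\<bar> \<le> B"
  unfolding A_eps_alt
  by (rule A_bound[OF Y_sp_D(1)[OF th] X_B1_D(2)[OF g t] e]) (use t in auto)

lemma F_int:
  assumes th: "th \<in> Y_sp T B3" and g: "g \<in> X_B1 T B1" and Th: "smooth_fn (\<lambda>(w,z,t). Th w z t)"
    and e: "\<epsilon> > 0" and B: "B3 \<ge> 0" and C: "C > 0" and M: "\<forall>t\<in>{0<..<T}. \<bar>Th s (g t) t\<bar> \<le> M"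
  shows "(\<lambda>(t1, t2). if t1 < t2 then max 0 (\<bar>A_eps B3 \<epsilon> th t2 (g t2) - A_eps B3 \<epsilon> th t1 (g t1)
                   - max 0 (Th s (g t2) t2 - Th s (g t1) t1)\<bar> - C * (t2 - t1)) else 0)
      integrable_on ({0<..<T} \<times> {0<..<T})" (is "?F integrable_on ?SS")
proof -
  define aS where "aS t = (if t \<in> {0<..<T} then A_eps B3 \<epsilon> th t (g t) else 0)" for t
  define bS where "bS t = (if t \<in> {0<..<T} then Th s (g t) t else 0)" for t
  have [measurable]: "aS \<in> borel_measurable borel" unfolding aS_def by (rule a_meas[OF th e B g])
  have [measurable]: "bS \<in> borel_measurable borel" unfolding bS_def by (rule b_meas[OF Th g])
  define FS where "FS x = (if fst x < snd x then max 0 (\<bar>aS (snd x) - aS (fst x) - max 0 (bS (snd x) - bS (fst x))\<bar> - C * (snd x - fst x)) else 0)" for x :: "real \<times> real"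
  have "FS \<in> borel_measurable borel" unfolding FS_def by measurable
  then have FSm: "FS \<in> borel_measurable (lebesgue_on ?SS)" by (rule borel_to_lebesgue_on)
  have eqF: "FS x = ?F x" if x: "x \<in> space (lebesgue_on ?SS)" for x
  proof -
    obtain t1 t2 where xe: "x = (t1, t2)" and t1: "t1 \<in> {0<..<T}" and t2: "t2 \<in> {0<..<T}" using x by auto
    have "aS t1 = A_eps B3 \<epsilon> th t1 (g t1)" "aS t2 = A_eps B3 \<epsilon> th t2 (g t2)"
      "bS t1 = Th s (g t1) t1" "bS t2 = Th s (g t2) t2" using t1 t2 by (simp_all only: aS_def bS_def if_True)
    then show ?thesis unfolding xe FS_def by simp
  qed
  have "(FS \<in> borel_measurable (lebesgue_on ?SS)) = (?F \<in> borel_measurable (lebesgue_on ?SS))"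
    by (rule measurable_cong) (rule eqF)
  with FSm have Fm: "?F \<in> borel_measurable (lebesgue_on ?SS)" by simp
  show ?thesis
  proof (rule measurable_bounded_by_integrable_imp_integrable_real[OF Fm integrable_on_const[OF SS_lmeas]])
    show "?SS \<in> sets lebesgue" using SS_lmeas by (rule fmeasurableD)
    fix x assume x: "x \<in> ?SS"
    then obtain t1 t2 where xe: "x = (t1, t2)" "t1 \<in> {0<..<T}" "t2 \<in> {0<..<T}" by auto
    have "\<bar>A_eps B3 \<epsilon> th t1 (g t1)\<bar> \<le> B3" "\<bar>A_eps B3 \<epsilon> th t2 (g t2)\<bar> \<le> B3"
      using A_bound'[OF th g _ e] xe by auto
    moreover have "\<bar>Th s (g t1) t1\<bar> \<le> M" "\<bar>Th s (g t2) t2\<bar> \<le> M" using M xe by auto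
    moreover have "C * (t2 - t1) \<ge> 0" if "t1 < t2" using C that by simp
    ultimately show "\<bar>?F x\<bar> \<le> 2 * B3 + 2 * M" unfolding xe(1) by (auto simp: max_def abs_if split: if_splits)
  qed
qed

lemma HF_lemma:
  assumes a: "\<And>t. a t = A_eps B3 \<epsilon> th t (g t)" and b: "\<And>t. b t = Th s (g t) t"
  shows "H_eps T B3 C \<epsilon> Th th s g = integral ({0<..<T} \<times> {0<..<T})
     (\<lambda>(t1::real, t2::real). if t1 < t2 then max 0 (\<bar>a t2 - a t1 - max 0 (b t2 - b t1)\<bar> - C * (t2 - t1)) else 0)"
proof -
  have a': "a = (\<lambda>t. A_eps B3 \<epsilon> th t (g t))" using a by (rule ext)
  have b': "b = (\<lambda>t. Th s (g t) t)" using b by (rule ext)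
  show ?thesis unfolding H_eps_def a' b' by (rule refl)
qed

lemma times_lmeas:
  fixes A B :: "real set"
  assumes "A \<in> sets borel" "B \<in> sets borel" "A \<subseteq> {0<..<T}" "B \<subseteq> {0<..<T}"
  shows "A \<times> B \<in> lmeasurable"
proof (rule bounded_set_imp_lmeasurable)
  have "A \<times> B \<subseteq> {0<..<T} \<times> {0<..<T}" using assms by auto
  then show "bounded (A \<times> B)" unfolding SS_box by (rule bounded_subset[OF bounded_box])
  have AB: "A \<times> B \<in> sets (borel \<Otimes>\<^sub>M borel)" using assms by auto
  have "A \<times> B \<in> sets (borel :: (real \<times> real) measure)" using AB unfolding borel_prod .
  then show "A \<times> B \<in> sets lebesgue" by simp
qed

theorem lemma6p13:
  fixes T B1 B3 C \<epsilon> :: real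
    and Qsat Th :: "real \<Rightarrow> real \<Rightarrow> real \<Rightarrow> real"
  assumes "T > 0" "B1 > 0" "B3 > 0" "C > 0" "\<epsilon> > 0"
    and "smooth_fn (\<lambda>(x, y, z). Qsat x y z)"
    and "\<forall>x y z. \<exists>D>0. ((\<lambda>u. Qsat u y z) has_real_derivative D) (at x)"
    and "\<forall>x y z. \<exists>D<0. ((\<lambda>u. Qsat x u z) has_real_derivative D) (at y)"
    and "\<forall>w z t. Th w z t + Qsat (Th w z t) z t = w"
    and "smooth_fn (\<lambda>(w, z, t). Th w z t)"
  shows "\<forall>th\<in>Y_sp T B3. \<forall>s. \<forall>g\<in>X_B1 T B1. \<forall>e>0. \<exists>d>0.
           \<forall>th'\<in>Y_sp T B3. \<forall>s'. \<forall>g'\<in>X_B1 T B1.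
             dist_Y T th' th < d \<and> \<bar>s' - s\<bar> < d \<and> L2dist_X T g' g < d \<longrightarrow>
             \<bar>H_eps T B3 C \<epsilon> Th th' s' g' - H_eps T B3 C \<epsilon> Th th s g\<bar> < e"
proof (intro ballI allI impI)
  fix th and s :: real and g and e :: real
  assume th: "th \<in> Y_sp T B3" and g: "g \<in> X_B1 T B1" and e: "e > 0"
  have Tp: "T > 0" and B3p: "B3 > 0" and Cp: "C > 0" and ep: "\<epsilon> > 0" using assms by auto
  note Thsm = assms(10)
  define TH where "TH = (\<lambda>(w::real, z::real, t::real). Th w z t)"
  have THc: "continuous_on UNIV TH" unfolding TH_def by (rule Th_cont[OF Thsm])
  define Kc where "Kc = {s-1..s+1} \<times> {0..1::real} \<times> {0..T}"
  have Kcomp: "compact Kc" unfolding Kc_def by (intro compact_Times compact_Icc)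
  have uc: "uniformly_continuous_on Kc TH"
    by (rule compact_uniformly_continuous[OF continuous_on_subset[OF THc] Kcomp]) auto
  obtain M where M: "\<forall>x\<in>Kc. \<bar>TH x\<bar> \<le> M"
    using compact_imp_bounded[OF compact_continuous_image[OF continuous_on_subset[OF THc subset_UNIV] Kcomp]]
    unfolding bounded_real by auto
  have M0: "0 \<le> M" using M[rule_format, of "(s,0,0)"] Tp by (auto simp: Kc_def)
  define \<rho> where "\<rho> = e / (8*T^2 + 8)"
  have h8: "(0::real) < 8*T^2 + 8" using zero_le_power2[of T] by linarith
  have \<rho>p: "\<rho> > 0" unfolding \<rho>_def using e h8 by (rule divide_pos_pos)
  obtain \<delta>1 where \<delta>1: "\<delta>1 > 0" "\<forall>x\<in>Kc. \<forall>x'\<in>Kc. dist x' x < \<delta>1 \<longrightarrow> dist (TH x') (TH x) < \<rho>"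
    using uc \<rho>p unfolding uniformly_continuous_on_def by metis
  define \<delta> where "\<delta> = min (\<delta>1/2) (\<rho>*\<epsilon>/(2*B3))"
  have \<delta>p: "\<delta> > 0" unfolding \<delta>_def using \<delta>1 \<rho>p ep B3p by simp
  define K0 where "K0 = 2*B3 + 2*M + 1"
  have K0p: "K0 > 0" unfolding K0_def using B3p M0 by simp
  define d where "d = min (min 1 (\<delta>1/2)) (min (\<rho>*\<epsilon>) (\<delta>^2 * e / (8*K0*T + 8)))"
  have dp: "d > 0" unfolding d_def using \<delta>1 \<rho>p ep \<delta>p e K0p Tp by (simp add: add_pos_pos)
  show "\<exists>d>0. \<forall>th'\<in>Y_sp T B3. \<forall>s'. \<forall>g'\<in>X_B1 T B1.
             dist_Y T th' th < d \<and> \<bar>s' - s\<bar> < d \<and> L2dist_X T g' g < d \<longrightarrow>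
             \<bar>H_eps T B3 C \<epsilon> Th th' s' g' - H_eps T B3 C \<epsilon> Th th s g\<bar> < e"
  proof (intro exI[of _ d] conjI ballI allI impI dp)
    fix th' and s' :: real and g'
    assume th': "th' \<in> Y_sp T B3" and g': "g' \<in> X_B1 T B1"
      and H: "dist_Y T th' th < d \<and> \<bar>s' - s\<bar> < d \<and> L2dist_X T g' g < d"
    have hY: "dist_Y T th' th < d" and hs: "\<bar>s' - s\<bar> < d" and hg: "L2dist_X T g' g < d" using H by auto
    have L2t: "L2dist_01 (th' t) (th t) < d" if t: "t \<in> {0..<T}" for t
    proof -
      have bd: "bdd_above ((\<lambda>t. L2dist_01 (th' t) (th t)) ` {0..<T})"
      proof (rule bdd_aboveI2)
        fix t assume t: "t \<in> {0..<T}"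
        note f1 = Y_sp_D(1)[OF th' t] and f2 = Y_sp_D(1)[OF th t]
        have "(L2dist_01 (th' t) (th t))^2 \<le> (2*B3)^2"
          using L2_int(2,3)[OF f1 f2] by (simp add: power_mult_distrib)
        moreover have "0 \<le> 2*B3" using B3p by simp
        ultimately show "L2dist_01 (th' t) (th t) \<le> 2*B3" by (rule power2_le_imp_le)
      qed
      have "L2dist_01 (th' t) (th t) \<le> dist_Y T th' th" unfolding dist_Y_def by (rule cSUP_upper[OF t bd])
      then show ?thesis using hY by simp
    qed
    define a where "a t = A_eps B3 \<epsilon> th t (g t)" for t
    define a' where "a' t = A_eps B3 \<epsilon> th' t (g' t)" for t
    define b where "b t = Th s (g t) t" for t
    define b' where "b' t = Th s' (g' t) t" for t
    define D where "D t = \<bar>a' t - a t\<bar> + \<bar>b' t - b t\<bar>" for t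
    define gS where "gS t = (if t \<in> {0<..<T} then g t else 0)" for t
    define gS' where "gS' t = (if t \<in> {0<..<T} then g' t else 0)" for t
    have [measurable]: "gS \<in> borel_measurable borel" unfolding gS_def by (rule X_meas[OF g])
    have [measurable]: "gS' \<in> borel_measurable borel" unfolding gS'_def by (rule X_meas[OF g'])
    define bad where "bad = {t. \<delta> \<le> \<bar>gS' t - gS t\<bar>}"
    have badb: "bad \<in> sets borel" unfolding bad_def by measurable
    have d1: "d \<le> 1" unfolding d_def by (rule min.coboundedI1) (rule min.cobounded1)
    have d2: "d \<le> \<delta>1/2" unfolding d_def by (rule min.coboundedI1) (rule min.cobounded2)
    have d3: "d \<le> \<rho>*\<epsilon>" unfolding d_def by (rule min.coboundedI2) (rule min.cobounded1)
    have d4: "d \<le> \<delta>^2 * e / (8*K0*T + 8)" unfolding d_def by (rule min.coboundedI2) (rule min.cobounded2)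
    have inK: "(s, g t, t) \<in> Kc" "(s', g' t, t) \<in> Kc" if t: "t \<in> {0<..<T}" for t
    proof -
      have "0 \<le> g t" "g t \<le> 1" "0 \<le> g' t" "g' t \<le> 1" using X_B1_D(2,3)[OF g t] X_B1_D(2,3)[OF g' t] by auto
      moreover have "s - 1 \<le> s'" "s' \<le> s + 1" using hs d1 by linarith+
      moreover have "0 \<le> t" "t \<le> T" using t by auto
      ultimately show "(s, g t, t) \<in> Kc" "(s', g' t, t) \<in> Kc" unfolding Kc_def by auto
    qed
    have bM: "\<bar>b t\<bar> \<le> M" "\<bar>b' t\<bar> \<le> M" if t: "t \<in> {0<..<T}" for t
      using M inK[OF t] by (auto simp: b_def b'_def TH_def)
    have aB: "\<bar>a t\<bar> \<le> B3" "\<bar>a' t\<bar> \<le> B3" if t: "t \<in> {0<..<T}" for t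
      using A_bound'[OF th g t ep] A_bound'[OF th' g' t ep] by (auto simp: a_def a'_def)
    have Dgood: "D t \<le> 3*\<rho>" if t: "t \<in> {0<..<T}" and gd: "\<bar>g' t - g t\<bar> < \<delta>" for t
    proof -
      have t0: "t \<in> {0..<T}" using t by auto
      note Y1 = Y_sp_D(1)[OF th' t0] and Y2 = Y_sp_D(1)[OF th t0]
      have g'0: "0 \<le> g' t" and g0: "0 \<le> g t" using X_B1_D(2)[OF g t] X_B1_D(2)[OF g' t] by auto
      have i1: "\<bar>(1/\<epsilon>)*integral {g' t..g' t+\<epsilon>} (extf B3 (th' t)) - (1/\<epsilon>)*integral {g' t..g' t+\<epsilon>} (extf B3 (th t))\<bar> \<le> d/\<epsilon>"
        by (rule A_diff[OF Y1 Y2 g'0 ep dp L2t[OF t0]])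
      have i2: "\<bar>(1/\<epsilon>)*integral {g' t..g' t+\<epsilon>} (extf B3 (th t)) - (1/\<epsilon>)*integral {g t..g t+\<epsilon>} (extf B3 (th t))\<bar> \<le> 2*B3*\<bar>g' t - g t\<bar>/\<epsilon>"
        by (rule A_lip[OF Y2 g'0 g0 ep])
      have j1: "d/\<epsilon> \<le> \<rho>" using d3 ep by (simp add: pos_divide_le_eq)
      have "2*B3*\<bar>g' t - g t\<bar> \<le> 2*B3*(\<rho>*\<epsilon>/(2*B3))"
        using gd B3p unfolding \<delta>_def by (intro mult_left_mono) auto
      also have "\<dots> = \<rho>*\<epsilon>" using B3p by simp
      finally have j2: "2*B3*\<bar>g' t - g t\<bar>/\<epsilon> \<le> \<rho>" using ep by (simp add: pos_divide_le_eq)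
      have ja: "\<bar>a' t - a t\<bar> \<le> 2*\<rho>" using i1 i2 j1 j2 unfolding a_def a'_def A_eps_alt by linarith
      have "dist (s', g' t, t) (s, g t, t) \<le> dist (s', g' t, t) (s, g' t, t) + dist (s, g' t, t) (s, g t, t)"
        by (rule dist_triangle)
      also have "\<dots> = \<bar>s' - s\<bar> + \<bar>g' t - g t\<bar>" by (simp add: dist_Pair_Pair dist_real_def)
      also have "\<dots> < \<delta>1" using hs d2 gd unfolding \<delta>_def by linarith
      finally have "dist (s', g' t, t) (s, g t, t) < \<delta>1" .
      then have "dist (TH (s', g' t, t)) (TH (s, g t, t)) < \<rho>" using \<delta>1(2) inK[OF t] by blast
      then have jb: "\<bar>b' t - b t\<bar> < \<rho>" by (simp add: TH_def b_def b'_def dist_real_def)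
      show ?thesis using ja jb unfolding D_def by linarith
    qed
    have Dall: "D t \<le> 3*\<rho> + K0 * indicator bad t" if t: "t \<in> {0<..<T}" for t
    proof (cases "t \<in> bad")
      case True
      have "D t \<le> 2*B3 + 2*M" using aB[OF t] bM[OF t] unfolding D_def by linarith
      then show ?thesis using True \<rho>p unfolding K0_def by simp
    next
      case False
      then have "\<bar>g' t - g t\<bar> < \<delta>" using t by (simp add: bad_def gS_def gS'_def)
      then show ?thesis using Dgood[OF t] False by simp
    qed
    define F where "F = (\<lambda>(t1::real, t2::real). if t1 < t2 then max 0 (\<bar>a t2 - a t1 - max 0 (b t2 - b t1)\<bar> - C * (t2 - t1)) else 0)"
    define F' where "F' = (\<lambda>(t1::real, t2::real). if t1 < t2 then max 0 (\<bar>a' t2 - a' t1 - max 0 (b' t2 - b' t1)\<bar> - C * (t2 - t1)) else 0)"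
    let ?S = "{0<..<T::real}"
    let ?SS = "{0<..<T::real} \<times> {0<..<T::real}"
    have HF: "H_eps T B3 C \<epsilon> Th th s g = integral ?SS F" unfolding F_def by (rule HF_lemma) (simp_all only: a_def b_def)
    have HF': "H_eps T B3 C \<epsilon> Th th' s' g' = integral ?SS F'" unfolding F'_def by (rule HF_lemma) (simp_all only: a'_def b'_def)
    have Fi: "F integrable_on ?SS" unfolding F_def a_def b_def
      by (rule F_int[where M=M, OF th g Thsm ep less_imp_le[OF B3p] Cp]) (use bM in \<open>auto simp: b_def\<close>)
    have F'i: "F' integrable_on ?SS" unfolding F'_def a'_def b'_def
      by (rule F_int[where M=M, OF th' g' Thsm ep less_imp_le[OF B3p] Cp]) (use bM in \<open>auto simp: b'_def\<close>)
    define G where "G x = 6*\<rho> + K0 * indicator (bad \<times> UNIV) x + K0 * indicator (UNIV \<times> bad) x" for x :: "real \<times> real"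
    have FG: "\<bar>F' x - F x\<bar> \<le> G x" if x: "x \<in> ?SS" for x
    proof -
      obtain t1 t2 where xe: "x = (t1, t2)" and t1: "t1 \<in> ?S" and t2: "t2 \<in> ?S" using x by auto
      have G: "G x = 6*\<rho> + K0 * indicator bad t1 + K0 * indicator bad t2"
        unfolding G_def xe by (simp add: indicator_def)
      have Gp: "3*\<rho> + K0 * indicator bad t1 + (3*\<rho> + K0 * indicator bad t2) = G x" unfolding G by simp
      show ?thesis
      proof (cases "t1 < t2")
        case True
        have "\<bar>F' x - F x\<bar> \<le> \<bar>a' t2 - a t2\<bar> + \<bar>a' t1 - a t1\<bar> + \<bar>b' t2 - b t2\<bar> + \<bar>b' t1 - b t1\<bar>"
        proof -
          have "F' x - F x = max 0 (\<bar>a' t2 - a' t1 - max 0 (b' t2 - b' t1)\<bar> - C * (t2 - t1))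
              - max 0 (\<bar>a t2 - a t1 - max 0 (b t2 - b t1)\<bar> - C * (t2 - t1))"
            unfolding F_def F'_def xe using True by simp
          then show ?thesis by (simp only:) (rule F_lip)
        qed
        also have "\<dots> = D t1 + D t2" unfolding D_def by simp
        also have "\<dots> \<le> G x" using Dall[OF t1] Dall[OF t2] Gp by linarith
        finally show ?thesis .
      next
        case False
        have "0 \<le> G x" unfolding G using \<rho>p K0p by simp
        then show ?thesis unfolding F_def F'_def xe using False by simp
      qed
    qed
    have Sb: "?S \<in> sets borel" by simp
    have badS: "bad \<inter> ?S \<in> sets borel" using badb Sb by (rule sets.Int)
    have badSl: "bad \<inter> ?S \<in> lmeasurable"
    proof (rule bounded_set_imp_lmeasurable)
      have "bounded ?S" by simp
      then show "bounded (bad \<inter> ?S)" by (rule bounded_subset) auto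
      show "bad \<inter> ?S \<in> sets lebesgue" using badS by simp
    qed
    define mb where "mb = measure lebesgue (bad \<inter> ?S)"
    have mb0: "0 \<le> mb" unfolding mb_def by simp
    have mS: "measure lebesgue ?S = T" using Tp by simp
    have l1: "(bad \<times> UNIV) \<inter> ?SS \<in> lmeasurable"
    proof -
      have "(bad \<times> UNIV) \<inter> ?SS = (bad \<inter> ?S) \<times> ?S" by auto
      then show ?thesis using times_lmeas[OF badS _ _ subset_refl, of T] by auto
    qed
    have l2: "(UNIV \<times> bad) \<inter> ?SS \<in> lmeasurable"
    proof -
      have "(UNIV \<times> bad) \<inter> ?SS = ?S \<times> (bad \<inter> ?S)" by auto
      then show ?thesis using times_lmeas[OF _ badS subset_refl, of T] by auto
    qed
    have I1: "integral ?SS (indicator (bad \<times> UNIV)) = mb * T"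
    proof -
      have "(bad \<times> UNIV) \<inter> ?SS = (bad \<inter> ?S) \<times> ?S" by auto
      then have "integral ?SS (indicator (bad \<times> UNIV)) = measure lebesgue ((bad \<inter> ?S) \<times> ?S)"
        using integral_indicator[OF l1] by simp
      also have "\<dots> = mb * T" unfolding mb_def using measure_Times_real[OF badS, of ?S] mS by simp
      finally show ?thesis .
    qed
    have I2: "integral ?SS (indicator (UNIV \<times> bad)) = mb * T"
    proof -
      have "(UNIV \<times> bad) \<inter> ?SS = ?S \<times> (bad \<inter> ?S)" by auto
      then have "integral ?SS (indicator (UNIV \<times> bad)) = measure lebesgue (?S \<times> (bad \<inter> ?S))"
        using integral_indicator[OF l2] by simp
      also have "\<dots> = mb * T" unfolding mb_def using measure_Times_real[OF _ badS, of ?S] mS by simp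
      finally show ?thesis .
    qed
    have ind1: "indicat_real (bad \<times> UNIV) integrable_on ?SS" using integrable_on_indicator[of "bad \<times> UNIV" ?SS] l1 by simp
    have ind2: "indicat_real (UNIV \<times> bad) integrable_on ?SS" using integrable_on_indicator[of "UNIV \<times> bad" ?SS] l2 by simp
    have k1: "(\<lambda>x. K0 * indicat_real (bad \<times> UNIV) x) integrable_on ?SS"
      using integrable_on_cmult_left[OF ind1, of K0] by simp
    have k2: "(\<lambda>x. K0 * indicat_real (UNIV \<times> bad) x) integrable_on ?SS"
      using integrable_on_cmult_left[OF ind2, of K0] by simp
    have c1: "(\<lambda>x. 6*\<rho>) integrable_on ?SS" by (rule integrable_on_const[OF SS_lmeas])
    have I0: "integral ?SS (\<lambda>x. 6*\<rho>) = 6*\<rho>*(T*T)"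
    proof -
      have "measure lebesgue ?SS = T * T" using measure_Times_real[of ?S ?S] mS by simp
      then have "integral ?SS (\<lambda>x. 1::real) = T*T" using lmeasure_integral[OF SS_lmeas] by simp
      moreover have "6*\<rho> * integral ?SS (\<lambda>x. 1::real) = integral ?SS (\<lambda>x. 6*\<rho>)"
        using integral_mult[OF integrable_on_const[OF SS_lmeas, of 1], of "6*\<rho>"] by simp
      ultimately show ?thesis by metis
    qed
    have Gi: "G integrable_on ?SS" unfolding G_def
      by (intro integrable_add c1 k1 k2)
    have IG: "integral ?SS G = 6*\<rho>*(T*T) + K0 * (mb * T) + K0 * (mb * T)"
    proof -
      have "integral ?SS G = integral ?SS (\<lambda>x. 6*\<rho>) + integral ?SS (\<lambda>x. K0 * indicator (bad \<times> UNIV) x) + integral ?SS (\<lambda>x. K0 * indicator (UNIV \<times> bad) x)"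
        unfolding G_def
        by (simp add: integral_add c1 k1 k2 integrable_add)
      also have "\<dots> = 6*\<rho>*(T*T) + K0 * (mb * T) + K0 * (mb * T)"
        using I0 I1 I2 integral_mult[OF ind1, of K0] integral_mult[OF ind2, of K0] by simp
      finally show ?thesis .
    qed
    have gi: "(\<lambda>t. (g' t - g t)^2) integrable_on ?S"
    proof (rule measurable_bounded_by_integrable_imp_integrable_real[OF _ integrable_on_const[of ?S 1]])
      have "(\<lambda>t. (gS' t - gS t)^2) \<in> borel_measurable borel" by measurable
      then have m1: "(\<lambda>t. (gS' t - gS t)^2) \<in> borel_measurable (lebesgue_on ?S)" by (rule borel_to_lebesgue_on)
      have eq: "\<And>t. t \<in> space (lebesgue_on ?S) \<Longrightarrow> (gS' t - gS t)^2 = (g' t - g t)^2"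
        by (simp add: gS_def gS'_def)
      have "((\<lambda>t. (gS' t - gS t)^2) \<in> borel_measurable (lebesgue_on ?S)) = ((\<lambda>t. (g' t - g t)^2) \<in> borel_measurable (lebesgue_on ?S))"
        by (rule measurable_cong) (rule eq)
      then show "(\<lambda>t. (g' t - g t)^2) \<in> borel_measurable (lebesgue_on ?S)" using m1 by simp
      fix t assume t: "t \<in> ?S"
      have "\<bar>g' t - g t\<bar> \<le> 1" using X_B1_D(2,3)[OF g t] X_B1_D(2,3)[OF g' t] by linarith
      then have "\<bar>g' t - g t\<bar>^2 \<le> 1^2" by (intro power_mono) auto
      then show "\<bar>(g' t - g t)^2\<bar> \<le> 1" by simp
    qed auto
    have Ig: "integral ?S (\<lambda>t. (g' t - g t)^2) < d^2"
    proof -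
      have nn: "0 \<le> integral ?S (\<lambda>t. (g' t - g t)^2)" by (rule integral_nonneg[OF gi]) auto
      have "sqrt (integral ?S (\<lambda>t. (g' t - g t)^2)) < d" using hg unfolding L2dist_X_def .
      then have "(sqrt (integral ?S (\<lambda>t. (g' t - g t)^2)))^2 < d^2"
        using nn by (intro power_strict_mono) auto
      then show ?thesis using nn by simp
    qed
    have cheb: "\<delta>^2 * mb \<le> integral ?S (\<lambda>t. (g' t - g t)^2)"
    proof -
      have ib: "indicat_real bad integrable_on ?S" using integrable_on_indicator[of bad ?S] badSl by simp
      have "mb = integral ?S (indicator bad)" unfolding mb_def using integral_indicator[OF badSl] by simp
      then have "\<delta>^2 * mb = integral ?S (\<lambda>t. \<delta>^2 * indicator bad t)" using integral_mult[OF ib] by simp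
      also have "\<dots> \<le> integral ?S (\<lambda>t. (g' t - g t)^2)"
      proof (rule integral_le)
        show "(\<lambda>t. \<delta>^2 * indicator bad t) integrable_on ?S" using integrable_on_cmult_left[OF ib, of "\<delta>^2"] by simp
        show "(\<lambda>t. (g' t - g t)^2) integrable_on ?S" by (rule gi)
        fix t :: real assume t: "t \<in> ?S"
        show "\<delta>^2 * indicator bad t \<le> (g' t - g t)^2"
        proof (cases "t \<in> bad")
          case True
          then have "\<delta> \<le> \<bar>g' t - g t\<bar>" using t by (simp add: bad_def gS_def gS'_def)
          then have "\<delta>^2 \<le> \<bar>g' t - g t\<bar>^2" using \<delta>p by (intro power_mono) auto
          then show ?thesis using True by simp
        qed simp
      qed
      finally show ?thesis .
    qed
    have "\<bar>H_eps T B3 C \<epsilon> Th th' s' g' - H_eps T B3 C \<epsilon> Th th s g\<bar> = \<bar>integral ?SS (\<lambda>x. F' x - F x)\<bar>"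
      unfolding HF HF' using integral_diff[OF F'i Fi] by simp
    also have "\<dots> \<le> integral ?SS G"
      using Henstock_Kurzweil_Integration.integral_norm_bound_integral[OF integrable_diff[OF F'i Fi] Gi] FG by simp
    also have "\<dots> = 6*\<rho>*(T*T) + 2 * K0 * T * mb" unfolding IG by (simp add: algebra_simps)
    also have "\<dots> < e"
    proof -
      have "\<delta>^2 * mb < d^2" using cheb Ig by linarith
      also have "d^2 \<le> d" using d1 dp by (simp add: power2_eq_square mult_left_le)
      also have "d \<le> \<delta>^2 * (e / (8*K0*T + 8))" using d4 by simp
      finally have m0: "\<delta>^2 * mb < \<delta>^2 * (e / (8*K0*T + 8))" .
      have dd: "0 < \<delta>^2" using \<delta>p by simp
      have "mb < e / (8*K0*T + 8)" using mult_less_cancel_left_pos[OF dd] m0 by blast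
      then have m1: "2 * K0 * T * mb \<le> 2 * K0 * T * (e / (8*K0*T + 8))"
        using K0p Tp by (intro mult_left_mono) auto
      have m2: "2 * K0 * T * (e / (8*K0*T + 8)) < e / 4"
      proof -
        have pos: "0 < 8*K0*T + 8" using K0p Tp by (simp add: add_pos_pos)
        have "2*K0*T*(e/(8*K0*T+8)) * (8*K0*T+8) = 2*K0*T*e" using pos by simp
        also have "\<dots> < e/4 * (8*K0*T+8)" using e by (simp add: algebra_simps)
        finally show ?thesis using mult_less_cancel_right_pos[OF pos] by blast
      qed
      have m3: "6*\<rho>*(T*T) < 3 * e / 4"
      proof -
        have "6*\<rho>*(T*T) * (8*T^2+8) = 6*e*(T*T)" unfolding \<rho>_def using h8 by simp
        also have "\<dots> < 3*e/4 * (8*T^2+8)" using e by (simp add: algebra_simps power2_eq_square)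
        finally show ?thesis using mult_less_cancel_right_pos[OF h8] by blast
      qed
      show ?thesis using m1 m2 m3 by linarith
    qed
    finally show "\<bar>H_eps T B3 C \<epsilon> Th th' s' g' - H_eps T B3 C \<epsilon> Th th s g\<bar> < e" .
  qed
qed


end
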